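(* Let $q\in\mathbb{R}[x]$ be a positive definite polynomial of degree two. (a) For every psd polynomial $f\in\mathbb{R}[x]$ there exist $\xi,\eta\in\mathbb{R}[x]$ with $f=\eta^2+q\xi^2$. (b) If $f\neq0$ in (a) has $\deg(f)=2d$, then the number of pairs $(\xi,\eta)\in\mathbb{R}[x]^2$ with $f=\eta^2+q\xi^2$ is at most $2^{d+1}$, with equality if and only if $q\nmid f$ and $f$ is square-free.
   Context: A real polynomial is psd (positive semidefinite) if it takes only nonnegative values on $\mathbb{R}$, and positive definite if it takes only positive values on $\mathbb{R}$. *)

theory Defs
  imports "HOL-Computational_Algebra.Polynomial" "HOL-Computational_Algebra.Squarefree"
begin

definition psd_poly :: "real poly \<Rightarrow> bool" where
  "psd_poly f \<longleftrightarrow> (\<forall>x. poly f x \<ge> 0)"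

definition pd_poly :: "real poly \<Rightarrow> bool" where
  "pd_poly f \<longleftrightarrow> (\<forall>x. poly f x > 0)"

end

theory Submission
  imports Defs "HOL-Computational_Algebra.Fundamental_Theorem_Algebra"
begin

definition ce :: "real poly \<Rightarrow> complex \<Rightarrow> complex" where
  "ce h z = poly (map_poly of_real h) z"

lemma ce_pCons[simp]: "ce (pCons a p) z = of_real a + z * ce p z"
  by (simp add: ce_def map_poly_pCons)
lemma ce_0[simp]: "ce 0 z = 0" by (simp add: ce_def)

lemma ce_add[simp]: "ce (p + q) z = ce p z + ce q z"
  by (induction p q rule: poly_induct2) (auto simp: algebra_simps)

lemma ce_smult[simp]: "ce (smult a p) z = of_real a * ce p z"
  by (induction p rule: pCons_induct) (auto simp: algebra_simps)

lemma ce_mult[simp]: "ce (p * q) z = ce p z * ce q z"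
  by (induction p rule: pCons_induct) (auto simp: algebra_simps)

lemma ce_minus[simp]: "ce (- p) z = - ce p z"
  using ce_smult[of "-1" p z] by simp

lemma ce_diff[simp]: "ce (p - q) z = ce p z - ce q z"
  using ce_add[of p "-q" z] by simp

lemma ce_1[simp]: "ce 1 z = 1" by (simp add: ce_def)

lemma ce_power[simp]: "ce (p ^ n) z = ce p z ^ n"
  by (induction n) simp_all

lemma ce_real: "ce h (of_real x) = of_real (poly h x)"
  by (induction h rule: pCons_induct) auto

lemma cnj_ce: "cnj (ce h z) = ce h (cnj z)"
  by (induction h rule: pCons_induct) auto

definition pz :: "complex \<Rightarrow> real poly" where
  "pz z = [:(Re z)^2 + (Im z)^2, -2*Re z, 1:]"

lemma ce_pz: "ce (pz z) z = 0"
  by (simp add: pz_def complex_eq_iff power2_eq_square algebra_simps)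

lemma degree_pz[simp]: "degree (pz z) = 2" by (simp add: pz_def)
lemma pz_nz[simp]: "pz z \<noteq> 0" by (simp add: pz_def)

lemma poly_pz: "poly (pz z) x = (x - Re z)^2 + (Im z)^2"
  by (simp add: pz_def power2_eq_square algebra_simps)

lemma pz_pos: "Im z \<noteq> 0 \<Longrightarrow> poly (pz z) x > 0"
  by (simp add: poly_pz add_nonneg_pos)

lemma pz_dvd_ce: "pz z dvd h \<Longrightarrow> ce h z = 0"
  by (auto simp: ce_pz)

lemma dvd_pz:
  assumes "Im z \<noteq> 0" "ce h z = 0"
  shows "pz z dvd h"
proof -
  define r where "r = h mod pz z"
  have dr: "degree r < 2" using degree_mod_less[of "pz z" h] unfolding r_def by (cases "h mod pz z = 0") auto
  have "h = pz z * (h div pz z) + r" by (simp add: r_def)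
  hence "ce h z = ce (pz z) z * ce (h div pz z) z + ce r z" by (metis ce_add ce_mult)
  hence cr: "ce r z = 0" using assms ce_pz by simp
  obtain a b where rab: "r = [:a, b:]"
  proof -
    have "r = [:coeff r 0, coeff r 1:]"
      using dr by (intro poly_eqI) (auto simp: coeff_pCons split: nat.splits intro!: coeff_eq_0)
    thus ?thesis using that by blast
  qed
  from cr have "of_real a + z * of_real b = 0" by (simp add: rab)
  hence "Im (of_real a + z * of_real b) = 0" "Re (of_real a + z * of_real b) = 0" by simp_all
  hence "b = 0" "a = 0" using assms by auto
  hence "r = 0" using rab by simp
  thus ?thesis unfolding r_def by (simp add: mod_eq_0_iff_dvd)
qed

definition pm :: "real poly \<Rightarrow> real poly \<times> real poly \<Rightarrow> real poly \<times> real poly \<Rightarrow> real poly \<times> real poly" where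
  "pm q a b = (fst a * snd b + snd a * fst b, snd a * snd b - q * fst a * fst b)"
definition cj :: "real poly \<times> real poly \<Rightarrow> real poly \<times> real poly" where
  "cj a = (- fst a, snd a)"
definition nm :: "real poly \<Rightarrow> real poly \<times> real poly \<Rightarrow> real poly" where
  "nm q a = (snd a)^2 + q * (fst a)^2"
definition sc :: "real poly \<Rightarrow> real poly \<times> real poly \<Rightarrow> real poly \<times> real poly" where
  "sc c a = (c * fst a, c * snd a)"

lemma nm_pm: "nm q (pm q a b) = nm q a * nm q b"
  by (simp add: nm_def pm_def power2_eq_square algebra_simps)
lemma pm_comm: "pm q a b = pm q b a"
  by (simp add: pm_def algebra_simps)
lemma pm_assoc: "pm q (pm q a b) c = pm q a (pm q b c)"
  by (simp add: pm_def algebra_simps)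
lemma pm_cj: "pm q a (cj a) = (0, nm q a)"
  by (simp add: pm_def cj_def nm_def power2_eq_square algebra_simps)
lemma nm_cj[simp]: "nm q (cj a) = nm q a"
  by (simp add: nm_def cj_def)
lemma cj_cj[simp]: "cj (cj a) = a" by (simp add: cj_def)
lemma pm_sc: "pm q a (sc c b) = sc c (pm q a b)"
  by (simp add: pm_def sc_def algebra_simps)
lemma pm_0p: "pm q (0, c) b = sc c b"
  by (simp add: pm_def sc_def algebra_simps)
lemma sc_inj: "c \<noteq> 0 \<Longrightarrow> sc c a = sc c b \<Longrightarrow> a = b"
  by (auto simp: sc_def prod_eq_iff)
lemma pm_inj:
  assumes "nm q p \<noteq> 0" "pm q p a = pm q p b" shows "a = b"
proof -
  have "pm q (cj p) (pm q p a) = pm q (cj p) (pm q p b)" using assms by simp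
  hence "pm q (pm q p (cj p)) a = pm q (pm q p (cj p)) b"
    by (metis pm_assoc pm_comm)
  hence "sc (nm q p) a = sc (nm q p) b" by (simp add: pm_cj pm_0p)
  thus ?thesis using assms sc_inj by blast
qed

definition ev :: "real poly \<Rightarrow> complex \<Rightarrow> complex \<Rightarrow> complex \<Rightarrow> real poly \<times> real poly \<Rightarrow> complex" where
  "ev q z w s a = ce (snd a) z + s * w * ce (fst a) z"

lemma ev_pm:
  assumes "w^2 = - ce q z" "s^2 = 1"
  shows "ev q z w s (pm q a b) = ev q z w s a * ev q z w s b"
proof -
  have "ev q z w s a * ev q z w s b = ce (snd a) z * ce (snd b) z + s^2 * w^2 * ce (fst a) z * ce (fst b) z
     + s * w * (ce (fst a) z * ce (snd b) z + ce (snd a) z * ce (fst b) z)"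
    by (simp add: ev_def power2_eq_square algebra_simps)
  also have "\<dots> = ev q z w s (pm q a b)"
    using assms by (simp add: ev_def pm_def algebra_simps)
  finally show ?thesis by simp
qed

lemma ev_cj: "ev q z w s (cj a) = ev q z w (-s) a"
  by (simp add: ev_def cj_def)

lemma ev_nm:
  assumes "w^2 = - ce q z" "s^2 = 1"
  shows "ev q z w s a * ev q z w (-s) a = ce (nm q a) z"
proof -
  have "ev q z w s a * ev q z w (-s) a = ce (snd a) z ^2 - s^2 * w^2 * ce (fst a) z ^ 2"
    by (simp add: ev_def power2_eq_square algebra_simps)
  thus ?thesis using assms by (simp add: nm_def)
qed

lemma ev_zero:
  assumes "w \<noteq> 0" "s^2 = 1" "ev q z w s a = 0" "ev q z w (-s) a = 0"
  shows "ce (fst a) z = 0" "ce (snd a) z = 0"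
proof -
  have "ev q z w s a - ev q z w (-s) a = 2 * s * w * ce (fst a) z" by (simp add: ev_def)
  moreover have "s \<noteq> 0" using assms(2) by auto
  ultimately show "ce (fst a) z = 0" using assms by simp
  thus "ce (snd a) z = 0" using assms(3) by (simp add: ev_def)
qed

lemma factor_lemma:
  assumes z: "Im z \<noteq> 0" and w: "w^2 = - ce q z" "w \<noteq> 0" and s: "s^2 = 1"
    and e1: "ev q z w s p = 0" and e2: "ev q z w s a = 0"
    and np: "nm q p = pz z" and na: "nm q a = pz z * g"
  shows "\<exists>b. nm q b = g \<and> a = pm q p b"
proof -
  define c where "c = pm q a (cj p)"
  have s': "(-s)^2 = 1" using s by simp
  have "ev q z w s c = 0" unfolding c_def using ev_pm[OF w(1) s] e2 by simp
  moreover have "ev q z w (-s) c = 0" unfolding c_def using ev_pm[OF w(1) s'] e1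
    by (simp add: ev_cj)
  ultimately have "ce (fst c) z = 0" "ce (snd c) z = 0" using ev_zero[OF w(2) s] by auto
  then obtain k1 k2 where k: "fst c = pz z * k1" "snd c = pz z * k2"
    using dvd_pz[OF z] by (metis dvdE)
  define b where "b = (k1, k2)"
  have cb: "c = sc (pz z) b" using k by (simp add: sc_def b_def prod_eq_iff)
  have "pm q p c = pm q a (pm q p (cj p))" unfolding c_def by (metis pm_assoc pm_comm)
  also have "\<dots> = sc (pz z) a" by (simp add: pm_cj np pm_comm[of q a] pm_0p)
  finally have "sc (pz z) (pm q p b) = sc (pz z) a" by (simp add: cb pm_sc)
  hence ab: "a = pm q p b" using sc_inj by (metis pz_nz)
  hence "pz z * g = pz z * nm q b" using na np nm_pm by metis
  hence "nm q b = g" by simp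
  thus ?thesis using ab by blast
qed

lemma nm_sc: "nm q (sc c b) = c^2 * nm q b"
  by (simp add: nm_def sc_def power_mult_distrib algebra_simps)

lemma ce_root:
  assumes "degree f > 0" shows "\<exists>z. ce f z = 0"
proof -
  have "degree (map_poly complex_of_real f) = degree f"
    by (rule degree_map_poly) simp
  hence "\<not> constant (poly (map_poly complex_of_real f))"
    using assms constant_degree[of "map_poly complex_of_real f"] by simp
  thus ?thesis using fundamental_theorem_of_algebra unfolding ce_def by blast
qed

lemma nonreal_root:
  assumes "degree f > 0" "\<forall>x. poly f x \<noteq> 0"
  shows "\<exists>z. Im z \<noteq> 0 \<and> pz z dvd f"
proof -
  obtain z where z: "ce f z = 0" using ce_root assms by blast
  have "Im z \<noteq> 0"
  proof
    assume "Im z = 0"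
    hence "z = of_real (Re z)" by (simp add: complex_eq_iff)
    hence "of_real (poly f (Re z)) = (0::complex)" using z ce_real by metis
    thus False using assms by simp
  qed
  thus ?thesis using dvd_pz z by blast
qed

lemma double_root:
  assumes "psd_poly f" "poly f s = 0"
  shows "\<exists>g. psd_poly g \<and> f = [:-s,1:]^2 * g"
proof -
  obtain h where h: "f = [:-s,1:] * h" using assms(2) poly_eq_0_iff_dvd by (metis dvdE)
  have "poly (pderiv f) s = 0"
    by (rule DERIV_local_min[OF poly_DERIV, of 1]) (use assms in \<open>auto simp: psd_poly_def\<close>)
  moreover have "pderiv f = [:-s,1:] * pderiv h + h * pderiv [:-s,1:]"
    unfolding h by (rule pderiv_mult)
  moreover have "pderiv [:-s,1:] = 1" by (simp add: pderiv_pCons)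
  ultimately have "poly h s = 0" by simp
  then obtain g where g: "h = [:-s,1:] * g" using poly_eq_0_iff_dvd by (metis dvdE)
  have f: "f = [:-s,1:]^2 * g" using h g by (simp only: power2_eq_square mult.assoc)
  have ne: "poly g y \<ge> 0" if "y \<noteq> s" for y
  proof -
    have "0 \<le> poly f y" using assms unfolding psd_poly_def by simp
    also have "poly f y = (y - s)^2 * poly g y" using f by simp
    finally show ?thesis using that by (simp add: zero_le_mult_iff)
  qed
  have "poly g s \<ge> 0"
  proof (rule ccontr)
    assume "\<not> poly g s \<ge> 0"
    hence "poly g s < 0" by simp
    moreover have "poly g \<midarrow>s\<rightarrow> poly g s" using poly_isCont isCont_def by blast
    ultimately obtain r where r: "0 < r" "\<forall>x. x \<noteq> s \<and> \<bar>s - x\<bar> < r \<longrightarrow> poly g x < 0"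
      using LIM_fun_less_zero by blast
    hence "poly g (s + r/2) < 0" by auto
    moreover have "poly g (s + r/2) \<ge> 0" using ne r by simp
    ultimately show False by simp
  qed
  hence "psd_poly g" using ne unfolding psd_poly_def by (metis)
  thus ?thesis using f by blast
qed

lemma rep_pz:
  assumes q: "pd_poly q" "degree q = 2" and z: "Im z \<noteq> 0"
  shows "\<exists>a. nm q a = pz z"
proof -
  define w where "w = csqrt (- ce q z)"
  have w2: "w^2 = - ce q z" unfolding w_def by simp
  define v where "v = Im w / Im z"
  define u where "u = Re w - v * Re z"
  define e where "e = [:u, v:]"
  have ce_e: "ce e z = w" using z by (simp add: e_def u_def v_def complex_eq_iff field_simps)
  define h where "h = e^2 + q"
  have "ce h z = 0" using w2 ce_e by (simp add: h_def)
  then obtain k where hk: "h = pz z * k" using dvd_pz[OF z] by (metis dvdE)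
  have h0: "poly h 0 > 0" using q unfolding pd_poly_def h_def by (simp add: add_nonneg_pos)
  hence "h \<noteq> 0" by auto
  have "degree (e^2) \<le> 2"
    using degree_power_le[of e 2] by (cases "v = 0") (auto simp: e_def)
  hence "degree h \<le> 2" using q degree_add_le[of "e^2" 2 q] by (simp add: h_def)
  moreover have "k \<noteq> 0" using hk \<open>h \<noteq> 0\<close> by auto
  ultimately have "degree k = 0" using hk degree_mult_eq[of "pz z" k] by simp
  then obtain \<kappa> where kk: "k = [:\<kappa>:]" by (metis degree_eq_zeroE)
  have "poly h 0 = poly (pz z) 0 * \<kappa>" using hk kk by simp
  hence kp: "\<kappa> > 0" using h0 pz_pos[OF z, of 0] by (simp add: zero_less_mult_iff)
  define a where "a = ([:1 / sqrt \<kappa>:], smult (1 / sqrt \<kappa>) e)"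
  have "nm q a = smult (1/\<kappa>) h"
    using kp by (simp add: a_def nm_def h_def power2_eq_square algebra_simps smult_add_right)
  also have "\<dots> = pz z" using hk kk kp by simp
  finally show ?thesis by blast
qed

lemma psd_div: "psd_poly (p * g) \<Longrightarrow> pd_poly p \<Longrightarrow> psd_poly g"
  unfolding psd_poly_def pd_poly_def
  by (metis poly_mult zero_le_mult_iff linorder_not_le)

lemma pd_pz: "Im z \<noteq> 0 \<Longrightarrow> pd_poly (pz z)"
  using pz_pos unfolding pd_poly_def by blast

lemma degree_lin2[simp]: "degree ([:-(s::real),1:]^2 * g) = (if g = 0 then 0 else 2 + degree g)"
proof (cases "g = 0")
  case False
  have "degree ([:-s,1:]^2) = 2" using degree_mult_eq[of "[:-s,1:]" "[:-s,1:]"] by (simp add: power2_eq_square)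
  moreover have "[:-s,1:]^2 \<noteq> 0" by simp
  ultimately show ?thesis using False by (simp add: degree_mult_eq)
qed simp

lemma part_a:
  assumes q: "pd_poly q" "degree q = 2"
  shows "psd_poly f \<Longrightarrow> \<exists>a. nm q a = f"
proof (induction "degree f" arbitrary: f rule: less_induct)
  case less
  show ?case
  proof (cases "f = 0")
    case True then have "nm q (0,0) = f" by (simp add: nm_def) thus ?thesis by blast
  next
    case False
    show ?thesis
    proof (cases "\<exists>s. poly f s = 0")
      case True
      then obtain s where "poly f s = 0" by blast
      then obtain g where g: "psd_poly g" "f = [:-s,1:]^2 * g" using double_root less.prems by blast
      have "g \<noteq> 0" using False g by auto
      hence "degree g < degree f" using g by simp
      then obtain b where "nm q b = g" using less.hyps g by blast
      hence "nm q (sc [:-s,1:] b) = f" using g by (simp add: nm_sc)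
      thus ?thesis by blast
    next
      case nr: False
      show ?thesis
      proof (cases "degree f = 0")
        case True
        then obtain c where c: "f = [:c:]" by (metis degree_eq_zeroE)
        have "c \<ge> 0" using less.prems c unfolding psd_poly_def by (metis poly_pCons poly_0 mult_zero_left add_0_right)
        hence "nm q (0, [:sqrt c:]) = f" using c by (simp add: nm_def power2_eq_square)
        thus ?thesis by blast
      next
        case False
        then obtain z where z: "Im z \<noteq> 0" "pz z dvd f" using nonreal_root nr by auto
        then obtain g where g: "f = pz z * g" by (metis dvdE)
        have "psd_poly g" using psd_div g less.prems pd_pz[OF z(1)] by blast
        moreover have "g \<noteq> 0" using g \<open>f \<noteq> 0\<close> by auto
        hence "degree g < degree f" using g by (simp add: degree_mult_eq)
        ultimately obtain b where b: "nm q b = g" using less.hyps by blast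
        obtain a where a: "nm q a = pz z" using rep_pz[OF q z(1)] by blast
        have "nm q (pm q a b) = f" using a b g by (simp add: nm_pm)
        thus ?thesis by blast
      qed
    qed
  qed
qed

lemma q_form:
  assumes q: "pd_poly q" "degree q = 2"
  shows "\<exists>z \<kappa>. Im z \<noteq> 0 \<and> \<kappa> > 0 \<and> q = smult \<kappa> (pz z)"
proof -
  have "\<forall>x. poly q x \<noteq> 0" using q unfolding pd_poly_def by (metis less_irrefl)
  hence "\<exists>z. Im z \<noteq> 0 \<and> pz z dvd q" using nonreal_root[of q] q(2) by simp
  then obtain z where z: "Im z \<noteq> 0" "pz z dvd q" by blast
  then obtain k where k: "q = pz z * k" by (metis dvdE)
  have "k \<noteq> 0" using k q by auto
  hence "degree k = 0" using k q by (simp add: degree_mult_eq)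
  then obtain \<kappa> where kk: "k = [:\<kappa>:]" by (metis degree_eq_zeroE)
  have "poly q 0 = poly (pz z) 0 * \<kappa>" using k kk by simp
  moreover have "poly q 0 > 0" using q unfolding pd_poly_def by blast
  ultimately have "\<kappa> > 0" using pz_pos[OF z(1), of 0] by (simp add: zero_less_mult_iff)
  moreover have "q = smult \<kappa> (pz z)" using k kk by simp
  ultimately show ?thesis using z by blast
qed

lemma lc_q:
  assumes q: "pd_poly q" "degree q = 2"
  shows "lead_coeff q > 0"
proof -
  obtain z \<kappa> where "Im z \<noteq> 0" "\<kappa> > 0" "q = smult \<kappa> (pz z)" using q_form[OF q] by blast
  thus ?thesis by (simp add: pz_def)
qed

lemma degree_add_pos:
  fixes A B :: "real poly"
  assumes "A = 0 \<or> lead_coeff A > 0" "B = 0 \<or> lead_coeff B > 0"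
  shows "degree (A + B) = max (degree A) (degree B)"
proof (cases "A = 0 \<or> B = 0")
  case True thus ?thesis by auto
next
  case False
  hence pA: "lead_coeff A > 0" and pB: "lead_coeff B > 0" using assms by auto
  consider "degree A < degree B" | "degree B < degree A" | "degree A = degree B" by linarith
  thus ?thesis
  proof cases
    case 1 thus ?thesis by (simp add: degree_add_eq_right)
  next
    case 2 thus ?thesis by (simp add: degree_add_eq_left)
  next
    case 3
    have "degree (A + B) \<le> degree A" using degree_add_le[of A "degree A" B] 3 by simp
    moreover have "coeff (A + B) (degree A) \<noteq> 0" using pA pB 3 by simp
    hence "degree A \<le> degree (A + B)" by (rule le_degree)
    ultimately show ?thesis using 3 by simp
  qed
qed

lemma deg_nm:
  assumes q: "pd_poly q" "degree q = 2" and a: "fst a \<noteq> 0"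
  shows "degree (nm q a) \<ge> 2 + 2 * degree (fst a)"
proof -
  have lq: "lead_coeff q > 0" using lc_q[OF q] .
  have q0: "q \<noteq> 0" using q by auto
  have dB: "degree (q * (fst a)^2) = 2 + 2 * degree (fst a)"
    using q a q0 by (simp add: degree_mult_eq degree_power_eq)
  have "lead_coeff (q * (fst a)^2) > 0" using lq a by (simp add: lead_coeff_mult lead_coeff_power)
  moreover have "(snd a)^2 = 0 \<or> lead_coeff ((snd a)^2) > 0"
    by (cases "snd a = 0") (auto simp: lead_coeff_power)
  ultimately have "degree (nm q a) = max (degree ((snd a)^2)) (degree (q * (fst a)^2))"
    unfolding nm_def by (intro degree_add_pos) auto
  thus ?thesis using dB by simp
qed

definition sols :: "real poly \<Rightarrow> real poly \<Rightarrow> (real poly \<times> real poly) set" where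
  "sols q f = {a. nm q a = f}"

lemma case0:
  assumes q: "pd_poly q" "degree q = 2" and f: "psd_poly f" "f \<noteq> 0" "degree f = 0"
  shows "finite (sols q f) \<and> card (sols q f) = 2 \<and> \<not> q dvd f \<and> squarefree f"
proof -
  obtain c where c: "f = [:c:]" using f by (metis degree_eq_zeroE)
  have "c \<ge> 0" using f(1) c unfolding psd_poly_def by (metis poly_pCons poly_0 mult_zero_left add_0_right)
  hence cp: "c > 0" using f(2) c by (cases "c = 0") auto
  have "sols q f = {(0::real poly, [:sqrt c:]), (0, [:- sqrt c:])}"
  proof (intro equalityI subsetI)
    fix a assume "a \<in> sols q f"
    hence na: "nm q a = [:c:]" using c by (simp add: sols_def)
    have "fst a = 0"
    proof (rule ccontr)
      assume "fst a \<noteq> 0"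
      from deg_nm[OF q this] na show False by simp
    qed
    hence "(snd a)^2 = [:c:]" using na by (simp add: nm_def)
    moreover have "snd a \<noteq> 0" using calculation cp by auto
    ultimately have "2 * degree (snd a) = 0" by (metis degree_power_eq degree_pCons_0)
    hence "degree (snd a) = 0" by simp
    then obtain e where e: "snd a = [:e:]" by (rule degree_eq_zeroE)
    hence "e^2 = c" using \<open>(snd a)^2 = [:c:]\<close> by (simp add: power2_eq_square)
    hence "\<bar>e\<bar> = sqrt c" using real_sqrt_abs[of e] by simp
    hence "e = sqrt c \<or> e = - sqrt c" by linarith
    thus "a \<in> {(0::real poly, [:sqrt c:]), (0, [:- sqrt c:])}" using e \<open>fst a = 0\<close> by (auto simp: prod_eq_iff)
  next
    fix a assume "a \<in> {(0::real poly, [:sqrt c:]), (0, [:- sqrt c:])}"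
    thus "a \<in> sols q f" using cp c by (auto simp: sols_def nm_def power2_eq_square)
  qed
  moreover have "(0::real poly, [:sqrt c:]) \<noteq> (0, [:- sqrt c:])" using cp by simp
  ultimately have "finite (sols q f) \<and> card (sols q f) = 2" by simp
  moreover have "\<not> q dvd f" using q f dvd_imp_degree_le[of q f] by auto
  moreover have "is_unit f" using f is_unit_iff_degree[of f] by simp
  hence "squarefree f" by (rule squarefree_unit)
  ultimately show ?thesis by blast
qed

lemma caseR:
  assumes q: "pd_poly q" "degree q = 2" and f: "f = [:-s,1:]^2 * g"
  shows "sols q f = sc [:-s,1:] ` sols q g" "inj_on (sc [:-s,1:]) X"
proof -
  show "inj_on (sc [:-s,1:]) X" by (rule inj_onI) (rule sc_inj[of "[:-s,1:]"], auto)
  show "sols q f = sc [:-s,1:] ` sols q g"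
  proof (intro equalityI subsetI)
    fix a assume "a \<in> sols q f"
    hence na: "nm q a = f" by (simp add: sols_def)
    have "poly (nm q a) s = 0" using na f by simp
    hence "poly (snd a) s ^ 2 + poly q s * poly (fst a) s ^ 2 = 0" by (simp add: nm_def)
    moreover have "poly q s > 0" using q unfolding pd_poly_def by blast
    moreover have "poly q s * poly (fst a) s ^ 2 \<ge> 0" using calculation(2) by simp
    ultimately have "poly (snd a) s ^ 2 = 0 \<and> poly q s * poly (fst a) s ^ 2 = 0"
      using add_nonneg_eq_0_iff[of "poly (snd a) s ^ 2" "poly q s * poly (fst a) s ^ 2"] by simp
    hence "poly (snd a) s = 0" "poly (fst a) s = 0" using \<open>poly q s > 0\<close> by simp_all
    then obtain k1 k2 where k: "fst a = [:-s,1:] * k1" "snd a = [:-s,1:] * k2"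
      using poly_eq_0_iff_dvd by (metis dvdE)
    have ak: "a = sc [:-s,1:] (k1, k2)" using k by (simp add: sc_def prod_eq_iff)
    hence "[:-s,1:]^2 * nm q (k1,k2) = [:-s,1:]^2 * g" using na f by (simp add: nm_sc)
    hence "nm q (k1,k2) = g" by simp
    thus "a \<in> sc [:-s,1:] ` sols q g" using ak by (auto simp: sols_def)
  next
    fix a assume "a \<in> sc [:-s,1:] ` sols q g"
    thus "a \<in> sols q f" using f by (auto simp: sols_def nm_sc)
  qed
qed

lemma caseQ:
  assumes q: "pd_poly q" "degree q = 2" and f: "f = q * g"
  shows "sols q f = (\<lambda>b. (snd b, q * fst b)) ` sols q g" "inj_on (\<lambda>b. (snd b, q * fst b)) X"
proof -
  have q0: "q \<noteq> 0" using q by auto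
  show "inj_on (\<lambda>b. (snd b, q * fst b)) X" using q0 by (auto intro!: inj_onI simp: prod_eq_iff)
  obtain z \<kappa> where z: "Im z \<noteq> 0" "\<kappa> > 0" "q = smult \<kappa> (pz z)" using q_form[OF q] by blast
  have cq: "ce q z = 0" using z by (simp add: ce_pz)
  show "sols q f = (\<lambda>b. (snd b, q * fst b)) ` sols q g"
  proof (intro equalityI subsetI)
    fix a assume "a \<in> sols q f"
    hence na: "nm q a = f" by (simp add: sols_def)
    have "ce (nm q a) z = 0" using na f cq by simp
    hence "ce (snd a) z = 0" using cq by (simp add: nm_def)
    then obtain k where k: "snd a = pz z * k" using dvd_pz[OF z(1)] by (metis dvdE)
    define k' where "k' = smult (1/\<kappa>) k"
    have k': "snd a = q * k'" using k z by (simp add: k'_def)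
    have "q * nm q (k', fst a) = nm q a" using k' by (simp add: nm_def power2_eq_square algebra_simps)
    hence "q * nm q (k', fst a) = q * g" using na f by simp
    hence "nm q (k', fst a) = g" using q0 by simp
    moreover have "a = (snd (k', fst a), q * fst (k', fst a))" using k' by (simp add: prod_eq_iff)
    ultimately show "a \<in> (\<lambda>b. (snd b, q * fst b)) ` sols q g" unfolding sols_def by force
  next
    fix a assume "a \<in> (\<lambda>b. (snd b, q * fst b)) ` sols q g"
    thus "a \<in> sols q f" using f by (auto simp: sols_def nm_def power2_eq_square algebra_simps)
  qed
qed

lemma get_s:
  assumes w: "w^2 = - ce q z" and p: "nm q p = pz z"
  shows "\<exists>s. s^2 = 1 \<and> ev q z w s p = 0"
proof -
  have "ev q z w 1 p * ev q z w (-1) p = 0" using ev_nm[OF w, of 1 p] p by (simp add: ce_pz)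
  hence "ev q z w 1 p = 0 \<or> ev q z w (-1) p = 0" by simp
  thus ?thesis by (metis power2_minus power_one)
qed

lemma case4_cover:
  assumes z: "Im z \<noteq> 0" and Q: "ce q z \<noteq> 0" and f: "f = pz z * g" and p: "nm q p = pz z"
  shows "sols q f = pm q p ` sols q g \<union> pm q (cj p) ` sols q g"
proof -
  define w where "w = csqrt (- ce q z)"
  have w: "w^2 = - ce q z" unfolding w_def by simp
  have w0: "w \<noteq> 0" using Q w by auto
  obtain s where s: "s^2 = 1" "ev q z w s p = 0" using get_s[OF w p] by blast
  have s': "(-s)^2 = 1" using s by simp
  show ?thesis
  proof (intro equalityI subsetI)
    fix a assume "a \<in> sols q f"
    hence na: "nm q a = pz z * g" using f by (simp add: sols_def)
    have "ev q z w s a * ev q z w (-s) a = 0" using ev_nm[OF w s(1)] na by (simp add: ce_pz)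
    hence "ev q z w s a = 0 \<or> ev q z w (-s) a = 0" by simp
    thus "a \<in> pm q p ` sols q g \<union> pm q (cj p) ` sols q g"
    proof
      assume "ev q z w s a = 0"
      then obtain b where "nm q b = g" "a = pm q p b"
        using factor_lemma[OF z w w0 s(1) s(2) _ p na] by blast
      thus ?thesis by (auto simp: sols_def)
    next
      assume "ev q z w (-s) a = 0"
      moreover have "ev q z w (-s) (cj p) = 0" using s by (simp add: ev_cj)
      ultimately obtain b where "nm q b = g" "a = pm q (cj p) b"
        using factor_lemma[OF z w w0 s', of "cj p" a g] p na by auto
      thus ?thesis by (auto simp: sols_def)
    qed
  next
    fix a assume "a \<in> pm q p ` sols q g \<union> pm q (cj p) ` sols q g"
    thus "a \<in> sols q f" using f p by (auto simp: sols_def nm_pm)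
  qed
qed

lemma case4_disj:
  assumes z: "Im z \<noteq> 0" and Q: "ce q z \<noteq> 0" and p: "nm q p = pz z"
    and g: "\<not> pz z dvd g" and b: "nm q b = g" and c: "nm q c = g"
    and eq: "pm q p b = pm q (cj p) c"
  shows False
proof -
  define w where "w = csqrt (- ce q z)"
  have w: "w^2 = - ce q z" unfolding w_def by simp
  have w0: "w \<noteq> 0" using Q w by auto
  obtain s where s: "s^2 = 1" "ev q z w s p = 0" using get_s[OF w p] by blast
  have s': "(-s)^2 = 1" using s by simp
  have ns: "ev q z w (-s) p \<noteq> 0"
  proof
    assume "ev q z w (-s) p = 0"
    hence "ce (fst p) z = 0" "ce (snd p) z = 0" using ev_zero[OF w0 s(1) s(2)] by auto
    then obtain k1 k2 where k: "fst p = pz z * k1" "snd p = pz z * k2"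
      using dvd_pz[OF z] by (metis dvdE)
    have "p = sc (pz z) (k1, k2)" using k by (simp add: sc_def prod_eq_iff)
    hence "pz z * 1 = pz z * (pz z * nm q (k1, k2))" using p by (simp add: nm_sc power2_eq_square)
    hence "1 = pz z * nm q (k1, k2)" by (metis pz_nz mult_left_cancel)
    hence "is_unit (pz z)" by (metis dvdI)
    thus False using is_unit_iff_degree[of "pz z"] by simp
  qed
  have "ev q z w (-s) (pm q p b) = ev q z w (-s) p * ev q z w (-s) b" using ev_pm[OF w s'] by simp
  moreover have "ev q z w (-s) (pm q (cj p) c) = 0" using ev_pm[OF w s'] s by (simp add: ev_cj)
  ultimately have "ev q z w (-s) b = 0" using eq ns by simp
  hence "ce g z = 0" using ev_nm[OF w s(1), of b] b by simp
  thus False using g dvd_pz[OF z] by blast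
qed

lemma setupQ:
  assumes q: "pd_poly q" "degree q = 2" and nq: "\<not> q dvd f"
    and z: "Im z \<noteq> 0" "pz z dvd f"
  shows "ce q z \<noteq> 0"
proof
  assume "ce q z = 0"
  then obtain k where k: "q = pz z * k" using dvd_pz[OF z(1)] by (metis dvdE)
  have "k \<noteq> 0" using k q by auto
  hence "degree k = 0" using k q by (simp add: degree_mult_eq)
  then obtain \<kappa> where kk: "k = [:\<kappa>:]" by (metis degree_eq_zeroE)
  have kn: "\<kappa> \<noteq> 0" using kk \<open>k \<noteq> 0\<close> by simp
  obtain h where h: "f = pz z * h" using z(2) by (metis dvdE)
  have "f = q * smult (1/\<kappa>) h" using h k kk kn by simp
  hence "q dvd f" by (rule dvdI)
  thus False using nq by simp
qed

lemma setupG: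
  assumes f: "psd_poly f" "f \<noteq> 0" and z: "Im z \<noteq> 0" "pz z dvd f"
  shows "\<exists>g. psd_poly g \<and> g \<noteq> 0 \<and> f = pz z * g \<and> degree f = degree g + 2"
proof -
  obtain g where g: "f = pz z * g" using z(2) by (metis dvdE)
  have "psd_poly g" using psd_div g f pd_pz[OF z(1)] by blast
  moreover have "g \<noteq> 0" using g f by auto
  moreover have "degree f = degree g + 2" using g calculation(2) by (simp add: degree_mult_eq)
  ultimately show ?thesis using g by blast
qed

lemma not_unit_pz: "\<not> is_unit (pz z)"
  using is_unit_iff_degree[of "pz z"] by simp

lemma not_unit_lin: "\<not> is_unit [:-(s::real),1:]"
  using is_unit_iff_degree[of "[:-s,1:]"] by simp

lemma part_b:
  assumes q: "pd_poly q" "degree q = 2"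
  shows "psd_poly f \<Longrightarrow> f \<noteq> 0 \<Longrightarrow> degree f = 2 * d \<Longrightarrow>
    finite (sols q f) \<and> card (sols q f) \<le> 2^(d+1) \<and>
    (card (sols q f) = 2^(d+1) \<longleftrightarrow> \<not> q dvd f \<and> squarefree f)"
proof (induction d arbitrary: f rule: less_induct)
  case (less d)
  note f = less.prems
  show ?case
  proof (cases "d = 0")
    case True thus ?thesis using case0[OF q f(1,2)] f(3) by simp
  next
    case False
    then obtain d' where d': "d = Suc d'" by (cases d) auto
    have dl: "d' < d" using d' by simp
    have IH: "\<And>g. psd_poly g \<Longrightarrow> g \<noteq> 0 \<Longrightarrow> degree g = 2*d' \<Longrightarrow>
      finite (sols q g) \<and> card (sols q g) \<le> 2^(d'+1) \<and>
      (card (sols q g) = 2^(d'+1) \<longleftrightarrow> \<not> q dvd g \<and> squarefree g)"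
      using less.IH[OF dl] by blast
    have pow: "(2::nat)^(d+1) = 2 * 2^(d'+1)" using d' by simp
    show ?thesis
    proof (cases "\<exists>s. poly f s = 0")
      case True
      then obtain s where "poly f s = 0" by blast
      then obtain g where g: "psd_poly g" "f = [:-s,1:]^2 * g" using double_root f(1) by blast
      have g0: "g \<noteq> 0" using g f by auto
      have dg: "degree g = 2*d'" using g g0 f(3) d' by simp
      from IH[OF g(1) g0 dg] have ih: "finite (sols q g)" "card (sols q g) \<le> 2^(d'+1)" by auto
      have "sols q f = sc [:-s,1:] ` sols q g" using caseR[OF q g(2)] by blast
      hence fin: "finite (sols q f)" and cd: "card (sols q f) = card (sols q g)"
        using ih caseR(2)[OF q g(2)] by (auto simp: card_image)
      have "[:-s,1:]^2 dvd f" using g(2) by simp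
      hence "\<not> squarefree f" using not_unit_lin[of s] unfolding squarefree_def by blast
      thus ?thesis using fin cd ih pow by auto
    next
      case nr: False
      show ?thesis
      proof (cases "q dvd f")
        case True
        obtain g where g: "f = q * g" using True by (metis dvdE)
        have gp: "psd_poly g" using psd_div g f q by blast
        have g0: "g \<noteq> 0" using g f by auto
        have "q \<noteq> 0" using q by auto
        hence "degree f = 2 + degree g" using g g0 q degree_mult_eq[of q g] by simp
        hence dg: "degree g = 2*d'" using f(3) d' by simp
        from IH[OF gp g0 dg] have ih: "finite (sols q g)" "card (sols q g) \<le> 2^(d'+1)" by auto
        have "sols q f = (\<lambda>b. (snd b, q * fst b)) ` sols q g" using caseQ[OF q g] by blast
        hence fin: "finite (sols q f)" and cd: "card (sols q f) = card (sols q g)"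
          using ih card_image[OF caseQ(2)[OF q g, of "sols q g"]] by auto
        thus ?thesis using True ih pow by auto
      next
        case nq: False
        show ?thesis
        proof (cases "\<exists>z. Im z \<noteq> 0 \<and> (pz z)^2 dvd f")
          case True
          then obtain z where z: "Im z \<noteq> 0" "(pz z)^2 dvd f" by blast
          then obtain k where k: "f = (pz z)^2 * k" by (metis dvdE)
          have zd: "pz z dvd f" using k by (simp add: power2_eq_square)
          obtain g where g: "psd_poly g" "g \<noteq> 0" "f = pz z * g" "degree f = degree g + 2"
            using setupG[OF f(1,2) z(1) zd] by blast
          have gk: "g = pz z * k" using g(3) k by (simp add: power2_eq_square mult.assoc)
          have "psd_poly k" using psd_div gk g(1) pd_pz[OF z(1)] by blast
          then obtain \<beta> where \<beta>: "nm q \<beta> = k" using part_a[OF q] by blast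
          have dg: "degree g = 2*d'" using g f(3) d' by simp
          from IH[OF g(1) g(2) dg] have ih: "finite (sols q g)" "card (sols q g) \<le> 2^(d'+1)" by auto
          obtain p where p: "nm q p = pz z" using rep_pz[OF q z(1)] by blast
          have Q: "ce q z \<noteq> 0" using setupQ[OF q nq z(1) zd] .
          define A where "A = pm q p ` sols q g"
          define B where "B = pm q (cj p) ` sols q g"
          have SAB: "sols q f = A \<union> B" using case4_cover[OF z(1) Q g(3) p] by (simp add: A_def B_def)
          have fA: "finite A" "finite B" using ih by (simp_all add: A_def B_def)
          have cA: "card A \<le> 2^(d'+1)" "card B \<le> 2^(d'+1)"
            using ih card_image_le unfolding A_def B_def by (metis le_trans)+
          define x where "x = pm q p (pm q (cj p) \<beta>)"
          have "nm q (pm q (cj p) \<beta>) = g" using p \<beta> gk by (simp add: nm_pm)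
          hence "x \<in> A" by (auto simp: A_def x_def sols_def)
          moreover have "nm q (pm q p \<beta>) = g" using p \<beta> gk by (simp add: nm_pm)
          moreover have "x = pm q (cj p) (pm q p \<beta>)" unfolding x_def by (metis pm_assoc pm_comm)
          ultimately have "x \<in> A \<inter> B" by (auto simp: B_def sols_def)
          hence "card (A \<inter> B) > 0" using fA by (auto simp: card_gt_0_iff)
          moreover have "card (A \<union> B) + card (A \<inter> B) = card A + card B" using card_Un_Int fA by metis
          ultimately have "card (A \<union> B) < 2^(d+1)" using cA pow by linarith
          hence "card (sols q f) < 2^(d+1)" using SAB by simp
          moreover have "\<not> squarefree f" using z(2) not_unit_pz[of z] unfolding squarefree_def by auto
          ultimately show ?thesis using SAB fA by auto
        next
          case n4: False
          have df: "degree f > 0" using f(3) d' by simp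
          obtain z where z: "Im z \<noteq> 0" "pz z dvd f" using nonreal_root[OF df] nr by blast
          obtain g where g: "psd_poly g" "g \<noteq> 0" "f = pz z * g" "degree f = degree g + 2"
            using setupG[OF f(1,2) z] by blast
          have dg: "degree g = 2*d'" using g f(3) d' by simp
          have sqf: "squarefree f"
            unfolding squarefree_def
          proof (intro allI impI)
            fix h assume hf: "h^2 dvd f"
            show "is_unit h"
            proof (rule ccontr)
              assume nu: "\<not> is_unit h"
              have h0: "h \<noteq> 0" using hf f(2) by auto
              have "degree h > 0" using nu is_unit_iff_degree[OF h0] by simp
              moreover have "\<forall>x. poly h x \<noteq> 0"
              proof
                fix x show "poly h x \<noteq> 0"
                proof
                  assume "poly h x = 0"
                  moreover obtain m where "f = h^2 * m" using hf by (metis dvdE)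
                  ultimately have "poly f x = 0" by simp
                  thus False using nr by blast
                qed
              qed
              ultimately obtain z' where z': "Im z' \<noteq> 0" "pz z' dvd h" using nonreal_root by blast
              hence "(pz z')^2 dvd h^2" by (simp add: dvd_power_same)
              hence "(pz z')^2 dvd f" using hf dvd_trans by blast
              thus False using n4 z' by blast
            qed
          qed
          have sqg: "squarefree g" using sqf g(3) squarefree_multD(2) by blast
          have nqg: "\<not> q dvd g" using nq g(3) by (metis dvd_mult)
          from IH[OF g(1) g(2) dg] sqg nqg
          have ih: "finite (sols q g)" "card (sols q g) = 2^(d'+1)" by auto
          have npg: "\<not> pz z dvd g"
          proof
            assume "pz z dvd g"
            hence "(pz z)^2 dvd f" using g(3) by (simp add: power2_eq_square)
            thus False using n4 z by blast
          qed
          obtain p where p: "nm q p = pz z" using rep_pz[OF q z(1)] by blast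
          have Q: "ce q z \<noteq> 0" using setupQ[OF q nq z] .
          define A where "A = pm q p ` sols q g"
          define B where "B = pm q (cj p) ` sols q g"
          have SAB: "sols q f = A \<union> B" using case4_cover[OF z(1) Q g(3) p] by (simp add: A_def B_def)
          have fA: "finite A" "finite B" using ih by (simp_all add: A_def B_def)
          have "inj_on (pm q p) (sols q g)" using pm_inj[of q p] p by (auto intro!: inj_onI)
          hence cA: "card A = 2^(d'+1)" using ih by (simp add: A_def card_image)
          have "inj_on (pm q (cj p)) (sols q g)" using pm_inj[of q "cj p"] p by (auto intro!: inj_onI)
          hence cB: "card B = 2^(d'+1)" using ih by (simp add: B_def card_image)
          have "A \<inter> B = {}"
          proof (rule ccontr)
            assume "A \<inter> B \<noteq> {}"
            then obtain b c where bc: "b \<in> sols q g" "c \<in> sols q g" "pm q p b = pm q (cj p) c"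
              unfolding A_def B_def by blast
            have "nm q b = g" "nm q c = g" using bc by (simp_all add: sols_def)
            thus False using case4_disj[OF z(1) Q p npg _ _ bc(3)] by blast
          qed
          hence "card (A \<union> B) = card A + card B" using card_Un_disjoint[OF fA] by blast
          hence "card (sols q f) = 2^(d+1)" using SAB cA cB pow by simp
          thus ?thesis using SAB fA nq sqf by auto
        qed
      qed
    qed
  qed
qed

lemma sols_eq: "{(\<xi>, \<eta>). f = \<eta>^2 + q * \<xi>^2} = sols q f"
  by (auto simp: sols_def nm_def)

theorem proposition1p1:
  fixes q :: "real poly"
  assumes "pd_poly q" and "degree q = 2"
  shows "(\<forall>f. psd_poly f \<longrightarrow> (\<exists>\<xi> \<eta>. f = \<eta>^2 + q * \<xi>^2))
    \<and> (\<forall>f (d::nat). psd_poly f \<and> f \<noteq> 0 \<and> degree f = 2 * d \<longrightarrow>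
         (let S = {(\<xi>, \<eta>). f = \<eta>^2 + q * \<xi>^2} in
            finite S \<and> card S \<le> 2 ^ (d + 1) \<and>
            (card S = 2 ^ (d + 1) \<longleftrightarrow> \<not> q dvd f \<and> squarefree f)))"
proof (intro conjI allI impI)
  fix f assume "psd_poly f"
  then obtain a where "nm q a = f" using part_a[OF assms] by blast
  thus "\<exists>\<xi> \<eta>. f = \<eta>^2 + q * \<xi>^2" by (auto simp: nm_def)
next
  fix f and d :: nat
  assume "psd_poly f \<and> f \<noteq> 0 \<and> degree f = 2 * d"
  thus "let S = {(\<xi>, \<eta>). f = \<eta>^2 + q * \<xi>^2} in
            finite S \<and> card S \<le> 2 ^ (d + 1) \<and>
            (card S = 2 ^ (d + 1) \<longleftrightarrow> \<not> q dvd f \<and> squarefree f)"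
    using part_b[OF assms] unfolding sols_eq Let_def by blast
qed

end
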